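(* Let $q'>0$, $e'\in(0,1)$, $q_{\max}>0$, $\mathcal D_3=\{(\omega,\omega'):0\le\omega\le\pi/2,\ 0\le\omega'\le\pi\}$, $\mathcal D_4=\{(q,e):0<q\le q_{\max},\ 0\le e\le1\}$. For each $(q,e)\in\mathcal D_4$, $$\min_{(\omega,\omega')\in\mathcal D_3}\delta_{\rm nod}=\max\{0,\ \ell^e_{\rm int},\ \ell^e_{\rm ext}\},\qquad \max_{(\omega,\omega')\in\mathcal D_3}\delta_{\rm nod}=\max\{u^e_{\rm link},\ |p'-q(1+e)|\},$$ where $\ell^e_{\rm int}(q,e)=q'-\frac{q(1+e)}{1-e}$ (with $\ell^e_{\rm int}(q,1)=-\infty$), $\ell^e_{\rm ext}(q,e)=q-Q'$, and $u^e_{\rm link}(q,e)=\min\{\frac{q(1+e)}{1-e}-q',\ Q'-q\}$ (with $u^e_{\rm link}(q,1)=Q'-q$).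
   Context: For $q>0$, $e\in[0,1]$ and angles $\omega,\omega'$, define $r_{\pm}=\frac{q(1+e)}{1\pm e\cos\omega}$, $r'_{\pm}=\frac{q'(1+e')}{1\pm e'\cos\omega'}$ (extended-real values allowed), $d^+=r'_+-r_+$, $d^-=r'_--r_-$, and the nodal distance $\delta_{\rm nod}=\min\{|d^+|,|d^-|\}$. $p'=q'(1+e')$, $Q'=\frac{q'(1+e')}{1-e'}$. *)

theory Defs
  imports "HOL-Library.Extended_Real" Complex_Main
begin

text \<open>Radial distances at the nodes, r_plus = q(1+e)/(1 + e cos w), r_minus = q(1+e)/(1 - e cos w),
  as extended reals: a vanishing denominator (only possible for e = 1) gives +infinity.\<close>
definition r_plus :: "real \<Rightarrow> real \<Rightarrow> real \<Rightarrow> ereal" where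
  "r_plus q e w = (if 1 + e * cos w = 0 then \<infinity> else ereal (q * (1 + e) / (1 + e * cos w)))"

definition r_minus :: "real \<Rightarrow> real \<Rightarrow> real \<Rightarrow> ereal" where
  "r_minus q e w = (if 1 - e * cos w = 0 then \<infinity> else ereal (q * (1 + e) / (1 - e * cos w)))"

definition d_plus :: "real \<Rightarrow> real \<Rightarrow> real \<Rightarrow> real \<Rightarrow> real \<Rightarrow> real \<Rightarrow> ereal" where
  "d_plus q e w q' e' w' = r_plus q' e' w' - r_plus q e w"

definition d_minus :: "real \<Rightarrow> real \<Rightarrow> real \<Rightarrow> real \<Rightarrow> real \<Rightarrow> real \<Rightarrow> ereal" where
  "d_minus q e w q' e' w' = r_minus q' e' w' - r_minus q e w"

definition delta_nod :: "real \<Rightarrow> real \<Rightarrow> real \<Rightarrow> real \<Rightarrow> real \<Rightarrow> real \<Rightarrow> ereal" where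
  "delta_nod q e w q' e' w' = min \<bar>d_plus q e w q' e' w'\<bar> \<bar>d_minus q e w q' e' w'\<bar>"

definition p_prime :: "real \<Rightarrow> real \<Rightarrow> real" where
  "p_prime q' e' = q' * (1 + e')"

definition Q_prime :: "real \<Rightarrow> real \<Rightarrow> real" where
  "Q_prime q' e' = q' * (1 + e') / (1 - e')"

definition l_int :: "real \<Rightarrow> real \<Rightarrow> real \<Rightarrow> real \<Rightarrow> ereal" where
  "l_int q e q' e' = (if e = 1 then -\<infinity> else ereal (q' - q * (1 + e) / (1 - e)))"

definition l_ext :: "real \<Rightarrow> real \<Rightarrow> real \<Rightarrow> real \<Rightarrow> real" where
  "l_ext q e q' e' = q - Q_prime q' e'"

definition u_link :: "real \<Rightarrow> real \<Rightarrow> real \<Rightarrow> real \<Rightarrow> real" where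
  "u_link q e q' e' = (if e = 1 then Q_prime q' e' - q
     else min (q * (1 + e) / (1 - e) - q') (Q_prime q' e' - q))"

end

theory Submission imports Defs begin

definition X :: "real \<Rightarrow> real \<Rightarrow> real \<Rightarrow> real" where
  "X q e c = q*(1+e)/(1+e*c)"
definition Y :: "real \<Rightarrow> real \<Rightarrow> real \<Rightarrow> real" where
  "Y q e c = q*(1+e)/(1-e*c)"

lemma ereal_min_real: "min (ereal a) (ereal b) = ereal (min a b)"
  by (simp add: min_def)

lemma rp: "1 + b * cos w \<noteq> 0 \<Longrightarrow> r_plus a b w = ereal (X a b (cos w))"
  by (simp add: r_plus_def X_def)
lemma rm: "1 - b * cos w \<noteq> 0 \<Longrightarrow> r_minus a b w = ereal (Y a b (cos w))"
  by (simp add: r_minus_def Y_def)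
lemma delta_fin:
  assumes "1 + e*cos w \<noteq> 0" "1 - e*cos w \<noteq> 0" "1 + e'*cos w' \<noteq> 0" "1 - e'*cos w' \<noteq> 0"
  shows "delta_nod q e w q' e' w' = ereal (min \<bar>X q' e' (cos w') - X q e (cos w)\<bar> \<bar>Y q' e' (cos w') - Y q e (cos w)\<bar>)"
  unfolding delta_nod_def d_plus_def d_minus_def rp[OF assms(1)] rp[OF assms(3)] rm[OF assms(2)] rm[OF assms(4)]
  by (simp only: ereal_minus(1) abs_ereal.simps(1) ereal_min_real)
lemma delta_inf:
  assumes "1 + e*cos w \<noteq> 0" "1 - e*cos w = 0" "1 + e'*cos w' \<noteq> 0" "1 - e'*cos w' \<noteq> 0"
  shows "delta_nod q e w q' e' w' = ereal \<bar>X q' e' (cos w') - X q e (cos w)\<bar>"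
proof -
  have "r_minus q e w = \<infinity>" using assms(2) by (simp add: r_minus_def)
  thus ?thesis
  unfolding delta_nod_def d_plus_def d_minus_def rp[OF assms(1)] rp[OF assms(3)] rm[OF assms(4)]
    by simp
qed

lemma pos_prime: fixes e c :: real assumes "0 \<le> e" "e < 1" "-1 \<le> c" "c \<le> 1"
  shows "1 + e*c > 0" "1 - e*c > 0"
proof -
  have "\<bar>e*c\<bar> \<le> e" using assms by (simp add: abs_mult mult_left_le)
  thus "1 + e*c > 0" "1 - e*c > 0" using assms by linarith+
qed

lemma X_prime_bounds: assumes "0 < q" "0 \<le> e" "e < 1" "-1 \<le> c" "c \<le> 1"
  shows "q \<le> X q e c" "X q e c \<le> q*(1+e)/(1-e)"
proof -
  have a: "1 + e*c > 0" using pos_prime assms by auto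
  have b: "1 + e*c \<le> 1 + e" "1 - e \<le> 1 + e*c" using assms mult_left_mono[of c 1 e] mult_left_mono[of "-1" c e] by auto
  have "q*(1+e)/(1+e) \<le> q*(1+e)/(1+e*c)"
    by (rule divide_left_mono) (use a b assms in auto)
  thus "q \<le> X q e c" using assms by (simp add: X_def)
  show "X q e c \<le> q*(1+e)/(1-e)" unfolding X_def
    by (rule divide_left_mono) (use a b assms in auto)
qed

lemma Y_X: "Y q e c = X q e (-c)" by (simp add: X_def Y_def)

lemma X_bounds: assumes "0 < q" "0 \<le> e" "e \<le> 1" "0 \<le> c" "c \<le> 1"
  shows "q \<le> X q e c" "X q e c \<le> q*(1+e)"
proof -
  have b: "1 + e*c \<le> 1 + e" "1 \<le> 1 + e*c" using assms mult_left_mono[of c 1 e] by auto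
  have "0 < 1 + e*c" using b by linarith
  have "q*(1+e)/(1+e) \<le> q*(1+e)/(1+e*c)"
    by (rule divide_left_mono) (use b assms \<open>0 < 1 + e*c\<close> in \<open>auto intro!: mult_pos_pos\<close>)
  thus "q \<le> X q e c" using assms by (simp add: X_def)
  have "q*(1+e)/(1+e*c) \<le> q*(1+e)/1"
    by (rule divide_left_mono) (use b assms \<open>0 < 1 + e*c\<close> in auto)
  thus "X q e c \<le> q*(1+e)" unfolding X_def by simp
qed

lemma Y_bounds: assumes "0 < q" "0 \<le> e" "e \<le> 1" "0 \<le> c" "c \<le> 1" "e*c < 1"
  shows "q*(1+e) \<le> Y q e c" "e < 1 \<Longrightarrow> Y q e c \<le> q*(1+e)/(1-e)"
proof -
  have b: "1 - e*c \<le> 1" "1 - e \<le> 1 - e*c" using assms mult_left_mono[of c 1 e] by auto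
  show "q*(1+e) \<le> Y q e c" unfolding Y_def
    using b assms by (simp add: le_divide_eq mult_le_cancel_left1)
  show "e < 1 \<Longrightarrow> Y q e c \<le> q*(1+e)/(1-e)" unfolding Y_def
    by (rule divide_left_mono) (use b assms in auto)
qed

lemma harm_id: assumes "1 + e*c \<noteq> 0" "1 - e*c \<noteq> 0"
  shows "2 * X q e c * Y q e c = q*(1+e) * (X q e c + Y q e c)"
  using assms by (simp add: X_def Y_def field_simps)

lemma harm_contra:
  fixes x y p x' y' p' :: real
  assumes "0<x" "0<y" "0<x'" "0<y'" "2*x*y = p*(x+y)" "2*x'*y' = p'*(x'+y')"
    "x < x'" "y < y'" "p'-p < x'-x" "p'-p < y'-y"
  shows False
proof -
  have "x*(2*y - p) = p*y" using assms(5) by (simp add: algebra_simps)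
  moreover have "p > 0"
  proof -
    have "p*(x+y) > 0" using assms(1,2,5) by (metis mult_pos_pos add_pos_pos mult_2)
    thus ?thesis using assms(1,2) by (simp add: zero_less_mult_iff)
  qed
  ultimately have "x*(2*y - p) > 0" using assms(2) by simp
  hence hy: "2*y - p > 0" using assms(1) by (simp add: zero_less_mult_iff)
  have "y*(2*x - p) = p*x" using assms(5) by (simp add: algebra_simps)
  hence "y*(2*x - p) > 0" using assms(1) \<open>p>0\<close> by simp
  hence hx: "2*x - p > 0" using assms(2) by (simp add: zero_less_mult_iff)
  have "(x+y)*(x+y) \<ge> 4*x*y" using sum_squares_ge_zero[of "x-y" 0]
    by (simp add: algebra_simps power2_eq_square)
  hence "(x+y)*(x+y) \<ge> (2*p)*(x+y)" using assms(5) by simp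
  hence hs: "x + y - 2*p \<ge> 0" using assms(1,2) by (simp add: mult_le_cancel_right)
  show False
  proof (cases "p' \<ge> p")
    case True
    define d where "d = p' - p"
    define a where "a = x' - x - d"
    define b where "b = y' - y - d"
    have a: "a > 0" "b > 0" "d \<ge> 0" using assms True by (auto simp: a_def b_def d_def)
    have "2*x'*y' - p'*(x'+y') = d*(x+y-2*p) + b*(2*x-p) + a*(2*y-p) + d*a + d*b + 2*a*b"
      using assms(5) unfolding a_def b_def d_def by (simp add: algebra_simps)
    moreover have "d*(x+y-2*p) + b*(2*x-p) + a*(2*y-p) + d*a + d*b + 2*a*b > 0"
      using a hx hy hs by (intro add_pos_nonneg add_nonneg_pos add_nonneg_nonneg mult_nonneg_nonneg mult_pos_pos) auto
    ultimately show False using assms(6) by simp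
  next
    case False
    define a where "a = x' - x"
    define b where "b = y' - y"
    have a: "a > 0" "b > 0" using assms by (auto simp: a_def b_def)
    have "2*x'*y' - p'*(x'+y') = (p-p')*(x+y) + b*(2*x-p') + a*(2*y-p') + 2*a*b"
      using assms(5) unfolding a_def b_def by (simp add: algebra_simps)
    moreover have "(p-p')*(x+y) + b*(2*x-p') + a*(2*y-p') + 2*a*b > 0"
      using a hx hy False assms(1,2) by (intro add_pos_pos add_nonneg_pos mult_nonneg_nonneg mult_pos_pos) auto
    ultimately show False using assms(6) by simp
  qed
qed


lemma upper_core:
  fixes x y p x' y' p' q Q q' Q' :: real
  assumes "0<x" "0<y" "0<x'" "0<y'" "2*x*y = p*(x+y)" "2*x'*y' = p'*(x'+y')"
    "q \<le> x" "x \<le> p" "p \<le> y" "y \<le> Q" "q' \<le> x'" "x' \<le> Q'" "q' \<le> y'" "y' \<le> Q'"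
  shows "min \<bar>x'-x\<bar> \<bar>y'-y\<bar> \<le> max (min (Q-q') (Q'-q)) \<bar>p'-p\<bar>"
proof (rule ccontr)
  assume "\<not> ?thesis"
  hence h: "\<bar>x'-x\<bar> > \<bar>p'-p\<bar>" "\<bar>y'-y\<bar> > \<bar>p'-p\<bar>"
     "\<bar>x'-x\<bar> > min (Q-q') (Q'-q)" "\<bar>y'-y\<bar> > min (Q-q') (Q'-q)" by auto
  consider "x < x'" "y < y'" | "x' < x" "y' < y" | "x \<le> x'" "y' \<le> y" | "x' \<le> x" "y \<le> y'" by linarith
  thus False
  proof cases
    case 1
    show False by (rule harm_contra[OF assms(1-6)]) (use 1 h in auto)
  next
    case 2
    show False by (rule harm_contra[OF assms(3,4,1,2,6,5)]) (use 2 h in auto)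
  next
    case 3 thus False using h assms by auto
  next
    case 4 thus False using h assms by auto
  qed
qed

lemma lower_core:
  fixes x y p x' y' q Q q' Q' :: real
  assumes "q \<le> x" "x \<le> p" "p \<le> y" "y \<le> Q" "q' \<le> x'" "x' \<le> Q'" "q' \<le> y'" "y' \<le> Q'"
  shows "q' - Q \<le> min \<bar>x'-x\<bar> \<bar>y'-y\<bar>" "q - Q' \<le> min \<bar>x'-x\<bar> \<bar>y'-y\<bar>"
  using assms by auto


lemma ereal_max_real: "max (ereal a) (ereal b) = ereal (max a b)"
  by (simp add: max_def)
lemma max_minf: "max (-\<infinity>) (x::ereal) = x" by (simp add: max_def)

lemma dom_facts:
  assumes "0 \<le> w" "w \<le> pi/2" "0 \<le> w'" "w' \<le> pi"
  shows "0 \<le> cos w" "cos w \<le> 1" "-1 \<le> cos w'" "cos w' \<le> 1"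
  using assms by (auto intro: cos_ge_zero)

lemma solve_c:
  fixes a e z :: real
  assumes "0 < e" "0 < z" "0 < a" "a \<le> (1+e)*z" "(1-e)*z \<le> a"
  shows "-1 \<le> (a/z - 1)/e" "(a/z - 1)/e \<le> 1" "-1 \<le> (1 - a/z)/e" "(1 - a/z)/e \<le> 1"
    "a/(1 + e*((a/z - 1)/e)) = z" "a/(1 - e*((1 - a/z)/e)) = z" "1 - e*((1 - a/z)/e) = a/z"
    "1 + e*((a/z - 1)/e) = a/z"
  using assms by (auto simp: divide_simps algebra_simps)

theorem proposition3:
  fixes q' e' qmax q e :: real
  assumes "q' > 0" and "0 < e'" and "e' < 1" and "qmax > 0"
    and "0 < q" and "q \<le> qmax" and "0 \<le> e" and "e \<le> 1"
  defines "S \<equiv> {delta_nod q e w q' e' w' | w w'. 0 \<le> w \<and> w \<le> pi / 2 \<and> 0 \<le> w' \<and> w' \<le> pi}"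
  shows "(max 0 (max (l_int q e q' e') (ereal (l_ext q e q' e'))) \<in> S \<and>
          (\<forall>x\<in>S. max 0 (max (l_int q e q' e') (ereal (l_ext q e q' e'))) \<le> x)) \<and>
         (ereal (max (u_link q e q' e') \<bar>p_prime q' e' - q * (1 + e)\<bar>) \<in> S \<and>
          (\<forall>x\<in>S. x \<le> ereal (max (u_link q e q' e') \<bar>p_prime q' e' - q * (1 + e)\<bar>)))"
proof -
  define p where "p = q*(1+e)"
  define P' where "P' = p_prime q' e'"
  define Q' where "Q' = Q_prime q' e'"
  define Qe where "Qe = q*(1+e)/(1-e)"
  have XQ': "X q' e' (-1) = Q'" by (simp add: X_def Q'_def Q_prime_def)
  have Xq': "X q' e' 1 = q'" using assms by (simp add: X_def)
  have Yq': "Y q' e' (-1) = q'" using assms by (simp add: Y_def)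
  have Xq: "X q e 1 = q" using assms by (simp add: X_def)
  have YQ: "e < 1 \<Longrightarrow> Y q e 1 = Qe" by (simp add: Y_def Qe_def)
  have P'X: "P' = X q' e' 0" "P' = Y q' e' 0" by (simp_all add: X_def Y_def P'_def p_prime_def)
  have pX: "p = X q e 0" "p = Y q e 0" by (simp_all add: X_def Y_def p_def)
  have qQ': "q' \<le> Q'" using X_prime_bounds[of q' e' 0] assms by (simp add: Q'_def Q_prime_def)
  have P'le: "P' \<le> 2*q'" using assms by (simp add: P'_def p_prime_def)
  have qp: "q \<le> p" "p \<le> 2*q" using assms by (auto simp: p_def)
  have pQe: "e < 1 \<Longrightarrow> p \<le> Qe" using Y_bounds[of q e 0] assms by (simp add: Y_def Qe_def p_def)
  define L where "L = max 0 (max (l_int q e q' e') (ereal (l_ext q e q' e')))"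
  define U where "U = ereal (max (u_link q e q' e') \<bar>p_prime q' e' - q * (1 + e)\<bar>)"
  have L_eq: "L = ereal (if e = 1 then max 0 (q - Q') else max 0 (max (q' - Qe) (q - Q')))"
  proof -
    have z: "(0::ereal) = ereal 0" by simp
    show ?thesis
      unfolding L_def l_int_def l_ext_def Q'_def Qe_def z
      by (simp only: if_distrib[of ereal] max_minf ereal_max_real split: if_split) simp
  qed
  have U_eq: "U = ereal (if e = 1 then max (Q' - q) \<bar>P' - p\<bar> else max (min (Qe - q') (Q' - q)) \<bar>P' - p\<bar>)"
    by (simp add: U_def u_link_def Q'_def Qe_def P'_def p_def)
  have bounds: "L \<le> delta_nod q e w q' e' w' \<and> delta_nod q e w q' e' w' \<le> U"
    if w: "0 \<le> w" "w \<le> pi/2" "0 \<le> w'" "w' \<le> pi" for w w'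
  proof -
    define c where "c = cos w"
    define c' where "c' = cos w'"
    have cc: "0 \<le> c" "c \<le> 1" "-1 \<le> c'" "c' \<le> 1" using dom_facts[OF w] by (auto simp: c_def c'_def)
    have pp: "1 + e'*c' > 0" "1 - e'*c' > 0" using pos_prime[of e' c'] cc assms by auto
    have ec: "0 \<le> e*c" "e*c \<le> 1" using cc assms mult_mono[of e 1 c 1] by auto
    have xb': "q' \<le> X q' e' c'" "X q' e' c' \<le> Q'" "q' \<le> Y q' e' c'" "Y q' e' c' \<le> Q'"
      using X_prime_bounds[of q' e' c'] X_prime_bounds[of q' e' "-c'"] assms cc
      by (auto simp: Y_X Q'_def Q_prime_def)
    have xb: "q \<le> X q e c" "X q e c \<le> p" using X_bounds[of q e c] assms cc by (auto simp: p_def)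
    show ?thesis
    proof (cases "e*c = 1")
      case True
      have "e*c \<le> e" using cc assms by (intro mult_left_le) auto
      moreover have "e*c \<le> c" using cc assms by (intro mult_left_le_one_le) auto
      ultimately have e1: "e = 1" "c = 1" using True cc assms by linarith+
      have d: "delta_nod q e w q' e' w' = ereal \<bar>X q' e' c' - q\<bar>"
        using delta_inf[of e w e' w' q q'] pp ec True e1 Xq by (simp add: c_def c'_def)
      have "max 0 (q - Q') \<le> \<bar>X q' e' c' - q\<bar>" using xb' by auto
      moreover have "\<bar>X q' e' c' - q\<bar> \<le> max (Q' - q) \<bar>P' - p\<bar>"
        using xb' P'le qp e1 by (auto simp: p_def)
      ultimately show ?thesis unfolding d L_eq U_eq using e1 by (simp add: max_def)
    next
      case False
      hence ec1: "e*c < 1" using ec by simp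
      have d: "delta_nod q e w q' e' w' = ereal (min \<bar>X q' e' c' - X q e c\<bar> \<bar>Y q' e' c' - Y q e c\<bar>)"
        using delta_fin[of e w e' w' q q'] pp ec ec1 by (simp add: c_def c'_def)
      have yb: "p \<le> Y q e c" "e < 1 \<Longrightarrow> Y q e c \<le> Qe"
        using Y_bounds[of q e c] assms cc ec1 by (auto simp: p_def Qe_def)
      have pos: "0 < X q e c" "0 < Y q e c" "0 < X q' e' c'" "0 < Y q' e' c'"
        using xb yb xb' qp assms by linarith+
      have h1: "2 * X q e c * Y q e c = p * (X q e c + Y q e c)"
        using harm_id[of e c q] ec ec1 by (simp add: p_def)
      have h2: "2 * X q' e' c' * Y q' e' c' = P' * (X q' e' c' + Y q' e' c')"
        using harm_id[of e' c' q'] pp by (simp add: P'_def p_prime_def)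
      have up: "min \<bar>X q' e' c' - X q e c\<bar> \<bar>Y q' e' c' - Y q e c\<bar>
          \<le> max (min (Y q e c - q') (Q' - q)) \<bar>P' - p\<bar>"
        by (rule upper_core[OF pos h1 h2]) (use xb yb xb' in auto)
      have lo: "q - Q' \<le> min \<bar>X q' e' c' - X q e c\<bar> \<bar>Y q' e' c' - Y q e c\<bar>"
        "e < 1 \<Longrightarrow> q' - Qe \<le> min \<bar>X q' e' c' - X q e c\<bar> \<bar>Y q' e' c' - Y q e c\<bar>"
        using lower_core[of q "X q e c" p "Y q e c" "Y q e c" q' "X q' e' c'" Q' "Y q' e' c'"]
          lower_core[of q "X q e c" p "Y q e c" Qe q' "X q' e' c'" Q' "Y q' e' c'"] xb yb xb' by auto
      define m where "m = min \<bar>X q' e' c' - X q e c\<bar> \<bar>Y q' e' c' - Y q e c\<bar>"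
      have m0: "0 \<le> m" by (simp add: m_def)
      note up' = up[folded m_def] and lo' = lo[folded m_def]
      have d': "delta_nod q e w q' e' w' = ereal m" using d by (simp add: m_def)
      show ?thesis
      proof (cases "e = 1")
        case True
        have r1: "max 0 (q - Q') \<le> m" using lo' m0 by simp
        have r2: "m \<le> max (Q' - q) \<bar>P' - p\<bar>"
          using up' by (auto simp: max_def min_def split: if_splits)
        show ?thesis unfolding d' L_eq U_eq if_P[OF True] ereal_less_eq(3) using r1 r2 by simp
      next
        case False
        hence "e < 1" using assms by simp
        have yq: "Y q e c \<le> Qe" using yb \<open>e<1\<close> by auto
        have r1: "max 0 (max (q' - Qe) (q - Q')) \<le> m" using lo' m0 \<open>e<1\<close> by simp
        have r2: "m \<le> max (min (Qe - q') (Q' - q)) \<bar>P' - p\<bar>"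
          using up' yq by (auto simp: max_def min_def split: if_splits)
        show ?thesis unfolding d' L_eq U_eq if_not_P[OF False] ereal_less_eq(3) using r1 r2 by simp
      qed
    qed
  qed
  have inS: "delta_nod q e w q' e' w' \<in> S" if "0 \<le> w" "w \<le> pi/2" "0 \<le> w'" "w' \<le> pi" for w w'
    using that unfolding S_def by blast
  have ne: "1 + e' * cos pi \<noteq> 0" "1 - e' * cos pi \<noteq> 0" "1 + e * cos 0 \<noteq> 0"
    using assms by auto
  have d0pi1: "delta_nod q e 0 q' e' pi = ereal (min \<bar>Q'-q\<bar> \<bar>q' - Qe\<bar>)" if "e < 1"
    using delta_fin[of e 0 e' pi q q'] ne that XQ' Yq' Xq YQ by simp
  have d0pi2: "delta_nod q e 0 q' e' pi = ereal \<bar>Q'-q\<bar>" if "e = 1"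
    using delta_inf[of e 0 e' pi q q'] ne that XQ' Xq by simp
  have dmid: "delta_nod q e (pi/2) q' e' (pi/2) = ereal \<bar>P' - p\<bar>"
    using delta_fin[of e "pi/2" e' "pi/2" q q'] P'X pX by simp
  have pi0: "0 \<le> (pi::real)/2" "(0::real) \<le> pi" "pi/2 \<le> (pi::real)" "(0::real) \<le> pi/2" by simp_all
  have UinS: "U \<in> S"
  proof (cases "e = 1")
    case True
    show ?thesis
    proof (cases "Q' - q \<le> \<bar>P' - p\<bar>")
      case True
      hence "U = delta_nod q e (pi/2) q' e' (pi/2)" unfolding U_eq dmid if_P[OF \<open>e=1\<close>] by simp
      thus ?thesis using inS[of "pi/2" "pi/2"] by simp
    next
      case False
      hence "U = delta_nod q e 0 q' e' pi" unfolding U_eq d0pi2[OF \<open>e=1\<close>] if_P[OF \<open>e=1\<close>] by simp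
      thus ?thesis using inS[of 0 pi] by simp
    qed
  next
    case False
    hence e1: "e < 1" using assms by simp
    show ?thesis
    proof (cases "min (Qe - q') (Q' - q) \<le> \<bar>P' - p\<bar>")
      case True
      hence "U = delta_nod q e (pi/2) q' e' (pi/2)" unfolding U_eq dmid if_not_P[OF \<open>e\<noteq>1\<close>] by simp
      thus ?thesis using inS[of "pi/2" "pi/2"] by simp
    next
      case False
      hence "U = delta_nod q e 0 q' e' pi" unfolding U_eq d0pi1[OF e1] if_not_P[OF \<open>e\<noteq>1\<close>] by (auto simp: min_def max_def)
      thus ?thesis using inS[of 0 pi] by simp
    qed
  qed
  have rp: "r_plus a b w = ereal (X a b (cos w))" if "1 + b * cos w \<noteq> 0" for a b w
    using that by (simp add: r_plus_def X_def)
  have rm: "r_minus a b w = ereal (Y a b (cos w))" if "1 - b * cos w \<noteq> 0" for a b w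
    using that by (simp add: r_minus_def Y_def)
  have dp0: "delta_nod q e w q' e' w' = 0" if "d_plus q e w q' e' w' = 0" for w w'
    using that by (simp add: delta_nod_def)
  have dm0: "delta_nod q e w q' e' w' = 0" if "d_minus q e w q' e' w' = 0" for w w'
    using that by (simp add: delta_nod_def)
  have LinS: "L \<in> S"
  proof (cases "(e < 1 \<and> q' > Qe) \<or> q > Q'")
    case True
    have "L = delta_nod q e 0 q' e' pi"
    proof (cases "e = 1")
      case True
      thus ?thesis using \<open>(e < 1 \<and> q' > Qe) \<or> q > Q'\<close> d0pi2 by (auto simp: L_eq)
    next
      case False
      hence "e < 1" using assms by simp
      thus ?thesis using \<open>(e < 1 \<and> q' > Qe) \<or> q > Q'\<close> d0pi1 False qp pQe qQ'
        by (auto simp: L_eq min_def max_def abs_if)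
    qed
    thus ?thesis using inS[of 0 pi] by simp
  next
    case False
    hence ov: "e = 1 \<or> q' \<le> Qe" "q \<le> Q'" using assms by auto
    have L0: "L = 0" using ov qp pQe qQ' by (auto simp: L_eq max_def)
    define z where "z = max q q'"
    have z: "0 < z" "q \<le> z" "q' \<le> z" "z \<le> Q'" using ov qQ' assms by (auto simp: z_def)
    have P'pos: "0 < P'" using assms by (simp add: P'_def p_prime_def)
    have ppos: "0 < p" using assms by (simp add: p_def)
    have Q'eq: "Q' = P'/(1-e')" by (simp add: Q'_def P'_def Q_prime_def p_prime_def)
    have zr1: "P' \<le> (1+e')*z" using z assms by (simp add: P'_def p_prime_def mult.commute mult_left_mono)
    have zr2: "(1-e')*z \<le> P'" using z(4) assms by (simp add: Q'eq le_divide_eq mult.commute)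
    note sc' = solve_c[OF assms(2) z(1) P'pos zr1 zr2]
    have pr1: "p \<le> (1+e)*z" using z assms by (simp add: p_def mult.commute mult_left_mono)
    show ?thesis
    proof (cases "z \<le> p")
      case True
      define c' where "c' = (P'/z - 1)/e'"
      define w' where "w' = arccos c'"
      have w': "0 \<le> w'" "w' \<le> pi" "cos w' = c'" using sc' by (auto simp: w'_def c'_def arccos_lbound arccos_ubound)
      have rp': "r_plus q' e' w' = ereal z"
        using rp[of e' w' q'] sc' w' P'pos z(1) by (simp add: X_def c'_def flip: P'_def[unfolded p_prime_def])
      show ?thesis
      proof (cases "e = 0")
        case True
        have "r_plus q e 0 = ereal z" using rp[of e 0 q] \<open>e = 0\<close> z \<open>z \<le> p\<close> by (simp add: X_def p_def)
        hence "delta_nod q e 0 q' e' w' = 0" using rp' by (intro dp0) (simp add: d_plus_def)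
        thus ?thesis using inS[of 0 w'] w' L0 by simp
      next
        case False
        hence epos: "0 < e" using assms by simp
        have pr2: "(1-e)*z \<le> p" using True assms z by (smt (verit) mult_left_le_one_le mult_nonneg_nonneg)
        note sc = solve_c[OF epos z(1) ppos pr1 pr2]
        define c where "c = (p/z - 1)/e"
        have c0: "0 \<le> c" using True z epos by (simp add: c_def le_divide_eq_1)
        define w where "w = arccos c"
        have c1: "-1 \<le> c" "c \<le> 1" using sc by (simp_all add: c_def)
        have w: "0 \<le> w" "w \<le> pi/2" "cos w = c" unfolding w_def
          using arccos_lbound[OF c1] arccos_le_pi2[OF c0 c1(2)] cos_arccos[OF c1] by auto
        have "r_plus q e w = ereal z"
          using rp[of e w q] sc w ppos z(1) by (simp add: X_def c_def flip: p_def)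
        hence "delta_nod q e w q' e' w' = 0" using rp' by (intro dp0) (simp add: d_plus_def)
        thus ?thesis using inS[of w w'] w w' L0 by simp
      qed
    next
      case False
      have epos: "0 < e"
      proof (rule ccontr)
        assume "\<not> 0 < e"
        hence "e = 0" using assms by simp
        hence "Qe = p" by (simp add: Qe_def p_def)
        thus False using False ov \<open>e = 0\<close> qp by (simp add: z_def)
      qed
      have pr2: "(1-e)*z \<le> p"
      proof (cases "e = 1")
        case True thus ?thesis using ppos by simp
      next
        case False
        hence "e < 1" using assms by simp
        hence "z \<le> Qe" using ov qp pQe False by (auto simp: z_def)
        thus ?thesis using \<open>e<1\<close> by (simp add: Qe_def le_divide_eq mult.commute flip: p_def)
      qed
      note sc = solve_c[OF epos z(1) ppos pr1 pr2]
      define c where "c = (1 - p/z)/e"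
      have c0: "0 \<le> c" using False z epos by (simp add: c_def)
      define w where "w = arccos c"
      have c1: "-1 \<le> c" "c \<le> 1" using sc by (simp_all add: c_def)
        have w: "0 \<le> w" "w \<le> pi/2" "cos w = c" unfolding w_def
          using arccos_lbound[OF c1] arccos_le_pi2[OF c0 c1(2)] cos_arccos[OF c1] by auto
      have "r_minus q e w = ereal z"
        using rm[of e w q] sc w ppos z by (simp add: Y_def c_def flip: p_def)
      define c' where "c' = (1 - P'/z)/e'"
      define w' where "w' = arccos c'"
      have w': "0 \<le> w'" "w' \<le> pi" "cos w' = c'" using sc' by (auto simp: w'_def c'_def arccos_lbound arccos_ubound)
      have "r_minus q' e' w' = ereal z"
        using rm[of e' w' q'] sc' w' P'pos z by (simp add: Y_def c'_def flip: P'_def[unfolded p_prime_def])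
      hence "delta_nod q e w q' e' w' = 0" using \<open>r_minus q e w = ereal z\<close> by (intro dm0) (simp add: d_minus_def)
      thus ?thesis using inS[of w w'] w w' L0 by simp
    qed
  qed
  have b12: "L \<le> x \<and> x \<le> U" if xS: "x \<in> S" for x
  proof -
    obtain w w' where "x = delta_nod q e w q' e' w'" "0 \<le> w" "w \<le> pi/2" "0 \<le> w'" "w' \<le> pi"
      using xS unfolding S_def by blast
    thus ?thesis using bounds by simp
  qed
  show ?thesis
    unfolding L_def[symmetric] U_def[symmetric] using LinS UinS b12 by (intro conjI ballI) auto
qed

end
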